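(* Let $K$ be a finite field, $G$ a finite group of order $m$ with a fixed ordering of its elements, $\varphi:KG\to K^m$ the associated coordinate isomorphism, and $KG=\mathcal{B}_0\oplus\cdots\oplus\mathcal{B}_s$ the block decomposition with $\mathcal{B}_i=f_iKG$. For each $i$ let $\pi_i:\mathcal{B}_i\to K^m$ be the restriction of $\varphi$ to $\mathcal{B}_i$. Let $\ell\ge1$, let $\mathcal{C}$ be a right $KG$-submodule of $KG^\ell$, identified with a linear code in $K^{m\ell}$ via $\varphi^\ell$, and let $\mathcal{C}_i=\mathcal{C}f_i\subseteq\mathcal{B}_i^\ell$. (a) Then $$\mathcal{C}=(\mathcal{B}_0\,\Box_{\pi_0}\,\mathcal{C}_0)\oplus\cdots\oplus(\mathcal{B}_s\,\Box_{\pi_s}\,\mathcal{C}_s),$$ where each $\mathcal{C}_i$ is a (possibly zero) linear code of length $\ell$ over the ring $\mathcal{B}_i$. (b) Suppose the blocks are ordered so that $\mathrm{d}(\mathcal{B}_0)\le\cdots\le\mathrm{d}(\mathcal{B}_s)$ and $\mathcal{C}\neq0$. Then $$\mathrm{d}(\mathcal{C})\ \ge\ \min_{0\le i\le s}\bigl\{\mathrm{d}(\mathcal{C}_i)\cdot \mathrm{d}(\mathcal{B}_0\oplus\cdots\oplus\mathcal{B}_i)\bigr\},$$ with the convention $\mathrm{d}(\mathcal{C}_i)=\infty$ if $\mathcal{C}_i=0$.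
   Context: For a ring $\mathcal{B}_i$, a $K$-linear injection $\pi_i:\mathcal{B}_i\to K^m$ and a subset $\mathcal{C}_i\subseteq\mathcal{B}_i^\ell$, the concatenated code is $\mathcal{B}_i\,\Box_{\pi_i}\,\mathcal{C}_i=\{(\pi_i(c_1),\ldots,\pi_i(c_\ell)) : (c_1,\ldots,c_\ell)\in\mathcal{C}_i\}\subseteq K^{m\ell}$. The Hamming weight of $v\in K^N$ is the number of nonzero coordinates; the minimum distance $\mathrm{d}$ of a $K$-subspace of $K^N$ (or of a subspace of $KG$, via $\varphi$) is the minimum weight of its nonzero elements. For a code $\mathcal{C}_i\subseteq\mathcal{B}_i^\ell$, $\mathrm{d}(\mathcal{C}_i)$ is the minimum, over nonzero $(c_1,\ldots,c_\ell)\in\mathcal{C}_i$, of the number of indices $j$ with $c_j\ne0$. The blocks $\mathcal{B}_i=f_iKG$ come from the primitive pairwise orthogonal central idempotents $f_0,\ldots,f_s$ of $KG$ with $\sum f_i=1$; $\mathcal{B}_0\oplus\cdots\oplus\mathcal{B}_i$ is regarded as a $K$-subspace of $KG\cong K^m$. *)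

theory Defs
  imports "HOL-Algebra.Group" "HOL-Library.Extended_Nat"
begin

definition grp_alg :: "('g, 'b) monoid_scheme \<Rightarrow> ('g \<Rightarrow> 'k::field) set" where
  "grp_alg G = {a. \<forall>x. x \<notin> carrier G \<longrightarrow> a x = 0}"

definition ga_zero :: "'g \<Rightarrow> 'k::field" where
  "ga_zero = (\<lambda>x. 0)"

definition ga_one :: "('g, 'b) monoid_scheme \<Rightarrow> 'g \<Rightarrow> 'k::field" where
  "ga_one G = (\<lambda>x. if x = \<one>\<^bsub>G\<^esub> then 1 else 0)"

definition ga_add :: "('g \<Rightarrow> 'k::field) \<Rightarrow> ('g \<Rightarrow> 'k) \<Rightarrow> 'g \<Rightarrow> 'k" where
  "ga_add a b = (\<lambda>x. a x + b x)"

definition ga_mult :: "('g, 'b) monoid_scheme \<Rightarrow> ('g \<Rightarrow> 'k::field) \<Rightarrow> ('g \<Rightarrow> 'k) \<Rightarrow> 'g \<Rightarrow> 'k" where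
  "ga_mult G a b = (\<lambda>x. if x \<in> carrier G
      then (\<Sum>y\<in>carrier G. a y * b (inv\<^bsub>G\<^esub> y \<otimes>\<^bsub>G\<^esub> x)) else 0)"

definition central_idem :: "('g, 'b) monoid_scheme \<Rightarrow> ('g \<Rightarrow> 'k::field) \<Rightarrow> bool" where
  "central_idem G e \<longleftrightarrow> e \<in> grp_alg G \<and> ga_mult G e e = e \<and>
     (\<forall>a\<in>grp_alg G. ga_mult G e a = ga_mult G a e)"

definition primitive_central_idem :: "('g, 'b) monoid_scheme \<Rightarrow> ('g \<Rightarrow> 'k::field) \<Rightarrow> bool" where
  "primitive_central_idem G e \<longleftrightarrow> central_idem G e \<and> e \<noteq> ga_zero \<and>
     (\<forall>e1 e2. central_idem G e1 \<and> central_idem G e2 \<and> ga_mult G e1 e2 = ga_zero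
        \<and> e = ga_add e1 e2 \<longrightarrow> e1 = ga_zero \<or> e2 = ga_zero)"

definition block :: "('g, 'b) monoid_scheme \<Rightarrow> ('g \<Rightarrow> 'k::field) \<Rightarrow> ('g \<Rightarrow> 'k) set" where
  "block G f = {ga_mult G f a | a. a \<in> grp_alg G}"

definition block_sum :: "('g, 'b) monoid_scheme \<Rightarrow> (nat \<Rightarrow> 'g \<Rightarrow> 'k::field) \<Rightarrow> nat \<Rightarrow> ('g \<Rightarrow> 'k) set" where
  "block_sum G f i = {(\<lambda>x. \<Sum>j\<le>i. b j x) | b. \<forall>j\<le>i. b j \<in> block G (f j)}"

text \<open>Vectors of K^N are encoded as functions nat => 'k vanishing at positions >= N.\<close>
definition kvec :: "nat \<Rightarrow> (nat \<Rightarrow> 'k::zero) set" where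
  "kvec N = {v. \<forall>p\<ge>N. v p = 0}"

text \<open>Coordinate map phi : KG -> K^m for the ordering e of the group elements
  (e k is the k-th element, k < m).\<close>
definition phi :: "nat \<Rightarrow> (nat \<Rightarrow> 'g) \<Rightarrow> ('g \<Rightarrow> 'k::zero) \<Rightarrow> nat \<Rightarrow> 'k" where
  "phi m e a = (\<lambda>k. if k < m then a (e k) else 0)"

definition tuples :: "nat \<Rightarrow> ('g \<Rightarrow> 'k::zero) set \<Rightarrow> (nat \<Rightarrow> 'g \<Rightarrow> 'k) set" where
  "tuples l R = {c. (\<forall>j<l. c j \<in> R) \<and> (\<forall>j\<ge>l. c j = (\<lambda>x. 0))}"

definition tup_zero :: "nat \<Rightarrow> 'g \<Rightarrow> 'k::zero" where
  "tup_zero = (\<lambda>j x. 0)"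

definition tup_add :: "(nat \<Rightarrow> 'g \<Rightarrow> 'k::field) \<Rightarrow> (nat \<Rightarrow> 'g \<Rightarrow> 'k) \<Rightarrow> nat \<Rightarrow> 'g \<Rightarrow> 'k" where
  "tup_add c c' = (\<lambda>j. ga_add (c j) (c' j))"

definition tup_rmult :: "('g, 'b) monoid_scheme \<Rightarrow> (nat \<Rightarrow> 'g \<Rightarrow> 'k::field) \<Rightarrow> ('g \<Rightarrow> 'k) \<Rightarrow> nat \<Rightarrow> 'g \<Rightarrow> 'k" where
  "tup_rmult G c a = (\<lambda>j. ga_mult G (c j) a)"

definition right_submodule :: "('g, 'b) monoid_scheme \<Rightarrow> nat \<Rightarrow> ('g \<Rightarrow> 'k::field) set
    \<Rightarrow> ('g \<Rightarrow> 'k) set \<Rightarrow> (nat \<Rightarrow> 'g \<Rightarrow> 'k) set \<Rightarrow> bool" where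
  "right_submodule G l R S C \<longleftrightarrow> C \<subseteq> tuples l R \<and> tup_zero \<in> C \<and>
     (\<forall>c\<in>C. \<forall>c'\<in>C. tup_add c c' \<in> C) \<and> (\<forall>c\<in>C. \<forall>a\<in>S. tup_rmult G c a \<in> C)"

text \<open>Concatenated code  B box_pi C  = {(pi(c_1),...,pi(c_l)) | c in C} in K^(m l).\<close>
definition concat_code :: "nat \<Rightarrow> nat \<Rightarrow> (('g \<Rightarrow> 'k::zero) \<Rightarrow> nat \<Rightarrow> 'k)
    \<Rightarrow> (nat \<Rightarrow> 'g \<Rightarrow> 'k) set \<Rightarrow> (nat \<Rightarrow> 'k) set" where
  "concat_code m l \<pi> C =
     {(\<lambda>p. if p < m * l then \<pi> (c (p div m)) (p mod m) else 0) | c. c \<in> C}"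

definition phi_l :: "nat \<Rightarrow> (nat \<Rightarrow> 'g) \<Rightarrow> nat \<Rightarrow> (nat \<Rightarrow> 'g \<Rightarrow> 'k::zero) \<Rightarrow> nat \<Rightarrow> 'k" where
  "phi_l m e l c = (\<lambda>p. if p < m * l then phi m e (c (p div m)) (p mod m) else 0)"

definition is_direct_sum :: "(nat \<Rightarrow> 'k::field) set \<Rightarrow> nat \<Rightarrow> (nat \<Rightarrow> (nat \<Rightarrow> 'k) set) \<Rightarrow> bool" where
  "is_direct_sum V s W \<longleftrightarrow>
     V = {(\<lambda>p. \<Sum>i\<le>s. w i p) | w. \<forall>i\<le>s. w i \<in> W i} \<and>
     (\<forall>w w'. (\<forall>i\<le>s. w i \<in> W i \<and> w' i \<in> W i) \<and>
        (\<lambda>p. \<Sum>i\<le>s. w i p) = (\<lambda>p. \<Sum>i\<le>s. w' i p) \<longrightarrow> (\<forall>i\<le>s. w i = w' i))"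

text \<open>Hamming weight and minimum distance of a subset of K^N (infinity if no nonzero element).\<close>
definition hweight :: "(nat \<Rightarrow> 'k::zero) \<Rightarrow> nat" where
  "hweight v = card {p. v p \<noteq> 0}"

definition min_dist :: "(nat \<Rightarrow> 'k::zero) set \<Rightarrow> enat" where
  "min_dist V = (INF v\<in>V - {(\<lambda>p. 0)}. enat (hweight v))"

text \<open>Minimum distance of a code C contained in R^l over a ring R
  (number of nonzero components; infinity if C = 0).\<close>
definition ring_code_dist :: "nat \<Rightarrow> (nat \<Rightarrow> 'g \<Rightarrow> 'k::zero) set \<Rightarrow> enat" where
  "ring_code_dist l C = (INF c\<in>C - {tup_zero}. enat (card {j. j < l \<and> c j \<noteq> (\<lambda>x. 0)}))"

end

theory Submission
  imports Defs
begin


lemma ga_mult_in: "ga_mult G a b \<in> grp_alg G"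
  by (simp add: ga_mult_def grp_alg_def)

lemma lmult_bij:
  fixes G (structure)
  assumes "group G" "z \<in> carrier G"
  shows "bij_betw (\<lambda>w. z \<otimes>\<^bsub>G\<^esub> w) (carrier G) (carrier G)"
proof -
  interpret group G by fact
  show ?thesis
  proof (rule bij_betwI[where g="\<lambda>y. inv z \<otimes> y"])
    show "(\<otimes>) z \<in> carrier G \<rightarrow> carrier G" using assms by auto
    show "(\<otimes>) (inv z) \<in> carrier G \<rightarrow> carrier G" using assms by auto
    fix x assume "x \<in> carrier G" then show "inv z \<otimes> (z \<otimes> x) = x"
      using assms by (metis inv_closed l_inv l_one m_assoc)
  next
    fix x assume "x \<in> carrier G" then show "z \<otimes> (inv z \<otimes> x) = x"
      using assms by (metis inv_closed r_inv l_one m_assoc)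
  qed
qed

lemma ga_mult_assoc:
  fixes G (structure)
  assumes "group G"
  shows "ga_mult G (ga_mult G a b) c = ga_mult G a (ga_mult G b c)"
proof
  fix x
  interpret group G by fact
  show "ga_mult G (ga_mult G a b) c x = ga_mult G a (ga_mult G b c) x"
  proof (cases "x \<in> carrier G")
    case False thus ?thesis by (simp add: ga_mult_def)
  next
    case True
    have "ga_mult G (ga_mult G a b) c x = (\<Sum>y\<in>carrier G. (\<Sum>z\<in>carrier G. a z * b (inv z \<otimes> y)) * c (inv y \<otimes> x))"
      using True by (simp add: ga_mult_def)
    also have "\<dots> = (\<Sum>z\<in>carrier G. \<Sum>y\<in>carrier G. a z * b (inv z \<otimes> y) * c (inv y \<otimes> x))"
      unfolding sum_distrib_right by (rule sum.swap)
    also have "\<dots> = (\<Sum>z\<in>carrier G. \<Sum>w\<in>carrier G. a z * b w * c (inv w \<otimes> (inv z \<otimes> x)))"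
    proof (rule sum.cong[OF refl])
      fix z assume z: "z \<in> carrier G"
      have "(\<Sum>y\<in>carrier G. a z * b (inv z \<otimes> y) * c (inv y \<otimes> x))
          = (\<Sum>w\<in>carrier G. a z * b (inv z \<otimes> (z \<otimes> w)) * c (inv (z \<otimes> w) \<otimes> x))"
        using sum.reindex_bij_betw[OF lmult_bij[OF assms z], of "\<lambda>y. a z * b (inv z \<otimes> y) * c (inv y \<otimes> x)"]
        by simp
      also have "\<dots> = (\<Sum>w\<in>carrier G. a z * b w * c (inv w \<otimes> (inv z \<otimes> x)))"
        apply (rule sum.cong[OF refl])
        using z True by (simp add: inv_mult_group m_assoc flip: m_assoc[of "inv z"])
      finally show "(\<Sum>y\<in>carrier G. a z * b (inv z \<otimes> y) * c (inv y \<otimes> x)) = (\<Sum>w\<in>carrier G. a z * b w * c (inv w \<otimes> (inv z \<otimes> x)))" .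
    qed
    also have "\<dots> = ga_mult G a (ga_mult G b c) x"
      using True by (simp add: ga_mult_def sum_distrib_left mult.assoc)
    finally show ?thesis .
  qed
qed

lemma ga_mult_one_right:
  fixes G (structure)
  assumes "group G" "a \<in> grp_alg G" "finite (carrier G)"
  shows "ga_mult G a (ga_one G) = a"
proof
  fix x
  interpret group G by fact
  show "ga_mult G a (ga_one G) x = a x"
  proof (cases "x \<in> carrier G")
    case False thus ?thesis using assms(2) by (simp add: ga_mult_def grp_alg_def)
  next
    case True
    have eq: "\<And>y. y \<in> carrier G \<Longrightarrow> (inv y \<otimes> x = \<one>) = (y = x)"
      using True by (metis inv_closed inv_inv l_inv inv_equality)
    have "ga_mult G a (ga_one G) x = (\<Sum>y\<in>carrier G. if y = x then a y else 0)"
      using True by (auto simp: ga_mult_def ga_one_def eq intro!: sum.cong)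
    also have "\<dots> = a x" using True by (simp add: sum.delta' assms(3))
    finally show ?thesis .
  qed
qed

lemma ga_mult_sum_right:
  "ga_mult G a (\<lambda>x. \<Sum>i\<in>I. b i x) = (\<lambda>x. \<Sum>i\<in>I. ga_mult G a (b i) x)"
proof
  fix x show "ga_mult G a (\<lambda>x. \<Sum>i\<in>I. b i x) x = (\<Sum>i\<in>I. ga_mult G a (b i) x)"
    unfolding ga_mult_def sum_distrib_left by (cases "x \<in> carrier G") (simp_all add: sum.swap[of _ I])
qed

lemma ga_mult_sum_left:
  "ga_mult G (\<lambda>x. \<Sum>i\<in>I. b i x) a = (\<lambda>x. \<Sum>i\<in>I. ga_mult G (b i) a x)"
proof
  fix x show "ga_mult G (\<lambda>x. \<Sum>i\<in>I. b i x) a x = (\<Sum>i\<in>I. ga_mult G (b i) a x)"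
    unfolding ga_mult_def sum_distrib_right by (cases "x \<in> carrier G") (simp_all add: sum.swap[of _ I])
qed

lemma ga_mult_zero_right [simp]: "ga_mult G a (\<lambda>x. 0) = (\<lambda>x. 0)"
  by (simp add: ga_mult_def fun_eq_iff)
lemma ga_mult_zero_left [simp]: "ga_mult G (\<lambda>x. 0) a = (\<lambda>x. 0)"
  by (simp add: ga_mult_def fun_eq_iff)

lemma ga_mult_add_left:
  "ga_mult G (ga_add a b) c = ga_add (ga_mult G a c) (ga_mult G b c)"
  by (auto simp: ga_mult_def ga_add_def distrib_right sum.distrib)



lemma phi_l_sum:
  "phi_l m e l (\<lambda>j x. \<Sum>i\<in>I. t i j x) = (\<lambda>p. \<Sum>i\<in>I. phi_l m e l (t i) p)"
  by (auto simp: phi_l_def phi_def fun_eq_iff)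

lemma phi_l_cong:
  assumes "\<And>j. j < l \<Longrightarrow> a j = b j"
  shows "phi_l m e l a = phi_l m e l b"
proof -
  have "p < m * l \<Longrightarrow> p div m < l" for p
    by (metis less_mult_imp_div_less mult.commute)
  then show ?thesis using assms by (auto simp: phi_l_def fun_eq_iff) metis
qed

lemma phi_l_inj:
  assumes ord: "bij_betw e {..<m} (carrier G)"
    and a: "\<And>j. j < l \<Longrightarrow> a j \<in> grp_alg G" and b: "\<And>j. j < l \<Longrightarrow> b j \<in> grp_alg G"
    and eq: "phi_l m e l a = phi_l m e l b" and j: "j < l"
  shows "a j = b j"
proof
  fix x
  show "a j x = b j x"
  proof (cases "x \<in> carrier G")
    case False thus ?thesis using a[OF j] b[OF j] by (simp add: grp_alg_def)
  next
    case True
    then obtain k where k: "k < m" "x = e k" using ord by (metis bij_betw_iff_bijections lessThan_iff)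
    define p where "p = j * m + k"
    have pm: "p div m = j" "p mod m = k" using k by (auto simp: p_def)
    have "p < m * l"
    proof -
      have "j * m + k < j * m + m" using k by simp
      also have "\<dots> = (j+1) * m" by simp
      also have "\<dots> \<le> l * m" using j by (intro mult_right_mono) auto
      finally show ?thesis by (simp add: p_def mult.commute)
    qed
    then have "phi_l m e l a p = phi_l m e l b p" using eq by simp
    then show ?thesis using pm k `p < m*l` by (simp add: phi_l_def phi_def)
  qed
qed

lemma concat_eq: "concat_code m l (phi m e) X = phi_l m e l ` X"
  by (auto simp: concat_code_def phi_l_def)

lemma C_sum:
  assumes CM: "right_submodule G l R S C" and fin: "finite I"
  shows "(\<forall>i\<in>I. t i \<in> C) \<Longrightarrow> (\<lambda>j x. \<Sum>i\<in>I. t i j x) \<in> C"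
  using fin
proof (induction I rule: finite_induct)
  case empty thus ?case using CM by (simp add: right_submodule_def tup_zero_def)
next
  case (insert i I)
  have "(\<lambda>j x. \<Sum>i\<in>insert i I. t i j x) = tup_add (t i) (\<lambda>j x. \<Sum>i\<in>I. t i j x)"
    using insert by (simp add: tup_add_def ga_add_def fun_eq_iff)
  then show ?case using insert CM unfolding right_submodule_def by simp
qed

lemma hweight_phi_l:
  assumes "0 < m"
  shows "hweight (phi_l m e l c) = (\<Sum>j<l. hweight (phi m e (c j)))"
proof -
  have "{p. phi_l m e l c p \<noteq> 0} = (\<Union>j\<in>{..<l}. (\<lambda>k. j*m+k) ` {k. phi m e (c j) k \<noteq> 0})"
  proof (intro equalityI subsetI)
    fix p assume "p \<in> {p. phi_l m e l c p \<noteq> 0}"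
    then have p: "p < m * l" "phi m e (c (p div m)) (p mod m) \<noteq> 0" by (auto simp: phi_l_def split: if_splits)
    have "p div m < l" using p(1) by (metis less_mult_imp_div_less mult.commute)
    moreover have "p = (p div m) * m + p mod m" by simp
    ultimately show "p \<in> (\<Union>j\<in>{..<l}. (\<lambda>k. j*m+k) ` {k. phi m e (c j) k \<noteq> 0})"
      using p(2) by blast
  next
    fix p assume "p \<in> (\<Union>j\<in>{..<l}. (\<lambda>k. j*m+k) ` {k. phi m e (c j) k \<noteq> 0})"
    then obtain j k where jk: "j < l" "p = j*m+k" "phi m e (c j) k \<noteq> 0" by blast
    then have k: "k < m" by (auto simp: phi_def split: if_splits)
    have pm: "p div m = j" "p mod m = k" using k jk by auto
    have "p < m * l"
    proof -
      have "j * m + k < j * m + m" using k by simp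
      also have "\<dots> = (j+1) * m" by simp
      also have "\<dots> \<le> l * m" using jk by (intro mult_right_mono) auto
      finally show ?thesis by (simp add: jk mult.commute)
    qed
    then show "p \<in> {p. phi_l m e l c p \<noteq> 0}" using pm jk by (simp add: phi_l_def)
  qed
  moreover have fin: "finite {k. phi m e (c j) k \<noteq> 0}" for j
    by (rule finite_subset[of _ "{..<m}"]) (auto simp: phi_def split: if_splits)
  moreover have "card (\<Union>j\<in>{..<l}. (\<lambda>k. j*m+k) ` {k. phi m e (c j) k \<noteq> 0})
       = (\<Sum>j<l. card ((\<lambda>k. j*m+k) ` {k. phi m e (c j) k \<noteq> 0}))"
  proof (rule card_UN_disjoint)
    show "\<forall>i\<in>{..<l}. \<forall>j\<in>{..<l}. i \<noteq> j \<longrightarrow>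
      (\<lambda>k. i*m+k) ` {k. phi m e (c i) k \<noteq> 0} \<inter> (\<lambda>k. j*m+k) ` {k. phi m e (c j) k \<noteq> 0} = {}"
    proof (intro ballI impI)
      fix i j :: nat assume "i \<noteq> j"
      show "(\<lambda>k. i*m+k) ` {k. phi m e (c i) k \<noteq> 0} \<inter> (\<lambda>k. j*m+k) ` {k. phi m e (c j) k \<noteq> 0} = {}"
      proof (rule ccontr)
        assume "\<not> ?thesis"
        then obtain k k' where kk: "i*m+k = j*m+k'" "phi m e (c i) k \<noteq> 0" "phi m e (c j) k' \<noteq> 0" by blast
        then have "k < m" "k' < m" by (auto simp: phi_def split: if_splits)
        then have "(i*m+k) div m = i" "(j*m+k') div m = j" by auto
        then show False using kk(1) `i \<noteq> j` by metis
      qed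
    qed
  qed (use fin in auto)
  moreover have "card ((\<lambda>k. j*m+k) ` {k. phi m e (c j) k \<noteq> 0}) = hweight (phi m e (c j))" for j
    by (simp add: card_image hweight_def)
  ultimately show ?thesis by (simp add: hweight_def)
qed


theorem theorem4p2:
  fixes G :: "('g, 'b) monoid_scheme"
    and e :: "nat \<Rightarrow> 'g"
    and f :: "nat \<Rightarrow> 'g \<Rightarrow> 'k::{field, finite}"
    and s l :: nat
    and C :: "(nat \<Rightarrow> 'g \<Rightarrow> 'k) set"
  assumes grp: "group G"
    and fin: "finite (carrier G)"
    and ord: "bij_betw e {..<card (carrier G)} (carrier G)"
    and prim: "\<And>i. i \<le> s \<Longrightarrow> primitive_central_idem G (f i)"
    and orth: "\<And>i j. i \<le> s \<Longrightarrow> j \<le> s \<Longrightarrow> i \<noteq> j \<Longrightarrow> ga_mult G (f i) (f j) = ga_zero"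
    and sum1: "(\<lambda>x. \<Sum>i\<le>s. f i x) = ga_one G"
    and l: "l \<ge> 1"
    and CM: "right_submodule G l (grp_alg G) (grp_alg G) C"
  shows
    "(is_direct_sum (phi_l (card (carrier G)) e l ` C) s
        (\<lambda>i. concat_code (card (carrier G)) l (phi (card (carrier G)) e)
               ((\<lambda>c. tup_rmult G c (f i)) ` C))
      \<and> (\<forall>i\<le>s. right_submodule G l (block G (f i)) (block G (f i))
               ((\<lambda>c. tup_rmult G c (f i)) ` C)))
     \<and> ((\<forall>i<s. min_dist (phi (card (carrier G)) e ` block G (f i))
                \<le> min_dist (phi (card (carrier G)) e ` block G (f (Suc i))))
        \<and> C \<noteq> {tup_zero}
        \<longrightarrow> min_dist (phi_l (card (carrier G)) e l ` C)
            \<ge> (MIN i\<in>{..s}. ring_code_dist l ((\<lambda>c. tup_rmult G c (f i)) ` C)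
                   * min_dist (phi (card (carrier G)) e ` block_sum G f i)))"
proof -
  define m where "m = card (carrier G)"
  interpret grp: group G by (rule grp)
  have m0: "0 < m" unfolding m_def using fin grp.one_closed card_gt_0_iff by blast
  have ordm: "bij_betw e {..<m} (carrier G)" using ord by (simp add: m_def)
  have ci: "central_idem G (f i)" if "i \<le> s" for i using prim[OF that] by (simp add: primitive_central_idem_def)
  have fin_alg: "f i \<in> grp_alg G" if "i \<le> s" for i using ci[OF that] by (simp add: central_idem_def)
  have fidem: "ga_mult G (f i) (f i) = f i" if "i \<le> s" for i using ci[OF that] by (simp add: central_idem_def)
  have fcomm: "ga_mult G (f i) a = ga_mult G a (f i)" if "i \<le> s" "a \<in> grp_alg G" for i a
    using ci[OF that(1)] that(2) by (simp add: central_idem_def)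
  have Ctup: "C \<subseteq> tuples l (grp_alg G)" using CM by (simp add: right_submodule_def)
  have Cal: "c j \<in> grp_alg G" if "c \<in> C" for c j
  proof (cases "j < l")
    case True thus ?thesis using Ctup that by (auto simp: tuples_def)
  next
    case False thus ?thesis using Ctup that by (auto simp: tuples_def grp_alg_def)
  qed
  have Cz: "c j = (\<lambda>x. 0)" if "c \<in> C" "\<not> j < l" for c j
    using Ctup that by (auto simp: tuples_def)
  have Crm: "tup_rmult G c a \<in> C" if "c \<in> C" "a \<in> grp_alg G" for c a
    using CM that by (simp add: right_submodule_def)
  have Cadd: "tup_add c c' \<in> C" if "c \<in> C" "c' \<in> C" for c c'
    using CM that by (simp add: right_submodule_def)
  have Czero: "tup_zero \<in> C" using CM by (simp add: right_submodule_def)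
  have dec: "a = (\<lambda>x. \<Sum>i\<le>s. ga_mult G a (f i) x)" if "a \<in> grp_alg G" for a
  proof -
    have "a = ga_mult G a (ga_one G)" using ga_mult_one_right[OF grp that fin] by simp
    also have "\<dots> = ga_mult G a (\<lambda>x. \<Sum>i\<le>s. f i x)" using sum1 by simp
    also have "\<dots> = (\<lambda>x. \<Sum>i\<le>s. ga_mult G a (f i) x)" by (rule ga_mult_sum_right)
    finally show ?thesis .
  qed
  have decC: "c = (\<lambda>j x. \<Sum>i\<le>s. tup_rmult G c (f i) j x)" if "c \<in> C" for c
  proof
    fix j show "c j = (\<lambda>x. \<Sum>i\<le>s. tup_rmult G c (f i) j x)"
      using dec[OF Cal[OF that]] by (simp add: tup_rmult_def)
  qed
  have proj: "ga_mult G (\<lambda>x. \<Sum>k\<le>s. ga_mult G (a k) (f k) x) (f i) = ga_mult G (a i) (f i)"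
    if "i \<le> s" for a i
  proof -
    have "ga_mult G (\<lambda>x. \<Sum>k\<le>s. ga_mult G (a k) (f k) x) (f i)
        = (\<lambda>x. \<Sum>k\<le>s. ga_mult G (ga_mult G (a k) (f k)) (f i) x)" by (rule ga_mult_sum_left)
    also have "\<dots> = (\<lambda>x. \<Sum>k\<le>s. if k = i then ga_mult G (a i) (f i) x else 0)"
    proof (rule ext, rule sum.cong[OF refl])
      fix x k assume k: "k \<in> {..s}"
      show "ga_mult G (ga_mult G (a k) (f k)) (f i) x = (if k = i then ga_mult G (a i) (f i) x else 0)"
        using k that fidem orth[of k i] by (simp add: ga_mult_assoc[OF grp] ga_zero_def)
    qed
    also have "\<dots> = ga_mult G (a i) (f i)" using that by (simp add: sum.delta')
    finally show ?thesis .
  qed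
  define W where "W i = phi_l m e l ` ((\<lambda>c. tup_rmult G c (f i)) ` C)" for i
  have A1: "phi_l m e l ` C = {(\<lambda>p. \<Sum>i\<le>s. w i p) | w. \<forall>i\<le>s. w i \<in> W i}"
  proof (intro equalityI subsetI)
    fix v assume "v \<in> phi_l m e l ` C"
    then obtain c where c: "c \<in> C" "v = phi_l m e l c" by blast
    have "v = phi_l m e l (\<lambda>j x. \<Sum>i\<le>s. tup_rmult G c (f i) j x)" using c decC by metis
    also have "\<dots> = (\<lambda>p. \<Sum>i\<le>s. phi_l m e l (tup_rmult G c (f i)) p)" by (rule phi_l_sum)
    finally have veq: "v = (\<lambda>p. \<Sum>i\<le>s. phi_l m e l (tup_rmult G c (f i)) p)" .
    have "\<forall>i\<le>s. phi_l m e l (tup_rmult G c (f i)) \<in> W i" using c(1) unfolding W_def by blast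
    then show "v \<in> {(\<lambda>p. \<Sum>i\<le>s. w i p) | w. \<forall>i\<le>s. w i \<in> W i}"
      using veq by (intro CollectI exI[of _ "\<lambda>i. phi_l m e l (tup_rmult G c (f i))"]) simp
  next
    fix v assume "v \<in> {(\<lambda>p. \<Sum>i\<le>s. w i p) | w. \<forall>i\<le>s. w i \<in> W i}"
    then obtain w where w: "v = (\<lambda>p. \<Sum>i\<le>s. w i p)" "\<forall>i\<le>s. w i \<in> W i" by blast
    then have "\<forall>i\<in>{..s}. \<exists>c. c \<in> C \<and> w i = phi_l m e l (tup_rmult G c (f i))" unfolding W_def by auto
    from bchoice[OF this] obtain cc0 where cc0: "\<forall>i\<in>{..s}. cc0 i \<in> C \<and> w i = phi_l m e l (tup_rmult G (cc0 i) (f i))"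
      by blast
    obtain cc where cc: "\<And>i. i \<le> s \<Longrightarrow> cc i \<in> C \<and> w i = phi_l m e l (tup_rmult G (cc i) (f i))"
      using cc0 by (metis atMost_iff)
    have "v = (\<lambda>p. \<Sum>i\<le>s. phi_l m e l (tup_rmult G (cc i) (f i)) p)" using w cc by simp
    also have "\<dots> = phi_l m e l (\<lambda>j x. \<Sum>i\<le>s. tup_rmult G (cc i) (f i) j x)" by (rule phi_l_sum[symmetric])
    finally show "v \<in> phi_l m e l ` C"
      using C_sum[OF CM, of "{..s}" "\<lambda>i. tup_rmult G (cc i) (f i)"] Crm[OF conjunct1[OF cc] fin_alg] by simp
  qed
  have A2: "\<forall>w w'. (\<forall>i\<le>s. w i \<in> W i \<and> w' i \<in> W i) \<and>
        (\<lambda>p. \<Sum>i\<le>s. w i p) = (\<lambda>p. \<Sum>i\<le>s. w' i p) \<longrightarrow> (\<forall>i\<le>s. w i = w' i)"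
  proof (rule allI, rule allI, rule impI)
    fix w w' assume h: "(\<forall>i\<le>s. w i \<in> W i \<and> w' i \<in> W i) \<and> (\<lambda>p. \<Sum>i\<le>s. w i p) = (\<lambda>p. \<Sum>i\<le>s. w' i p)"
    then have "\<forall>i\<in>{..s}. \<exists>c. c \<in> C \<and> w i = phi_l m e l (tup_rmult G c (f i))" unfolding W_def by auto
    from bchoice[OF this] obtain cc0 where cc0: "\<forall>i\<in>{..s}. cc0 i \<in> C \<and> w i = phi_l m e l (tup_rmult G (cc0 i) (f i))"
      by blast
    obtain cc where cc: "\<And>i. i \<le> s \<Longrightarrow> cc i \<in> C \<and> w i = phi_l m e l (tup_rmult G (cc i) (f i))"
      using cc0 by (metis atMost_iff)
    from h have "\<forall>i\<in>{..s}. \<exists>c. c \<in> C \<and> w' i = phi_l m e l (tup_rmult G c (f i))" unfolding W_def by auto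
    from bchoice[OF this] obtain cc'0 where cc'0: "\<forall>i\<in>{..s}. cc'0 i \<in> C \<and> w' i = phi_l m e l (tup_rmult G (cc'0 i) (f i))"
      by blast
    obtain cc' where cc': "\<And>i. i \<le> s \<Longrightarrow> cc' i \<in> C \<and> w' i = phi_l m e l (tup_rmult G (cc' i) (f i))"
      using cc'0 by (metis atMost_iff)
    define T where "T = (\<lambda>j x. \<Sum>i\<le>s. tup_rmult G (cc i) (f i) j x)"
    define T' where "T' = (\<lambda>j x. \<Sum>i\<le>s. tup_rmult G (cc' i) (f i) j x)"
    have TC: "T \<in> C" unfolding T_def
      using C_sum[OF CM, of "{..s}" "\<lambda>i. tup_rmult G (cc i) (f i)"] Crm[OF conjunct1[OF cc] fin_alg] by simp
    have TC': "T' \<in> C" unfolding T'_def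
      using C_sum[OF CM, of "{..s}" "\<lambda>i. tup_rmult G (cc' i) (f i)"] Crm[OF conjunct1[OF cc'] fin_alg] by simp
    have "phi_l m e l T = (\<lambda>p. \<Sum>i\<le>s. w i p)" unfolding T_def phi_l_sum using cc by simp
    moreover have "phi_l m e l T' = (\<lambda>p. \<Sum>i\<le>s. w' i p)" unfolding T'_def phi_l_sum using cc' by simp
    ultimately have "phi_l m e l T = phi_l m e l T'" using h by simp
    then have TT: "T j = T' j" if "j < l" for j
      using phi_l_inj[OF ordm _ _ _ that] Cal TC TC' by blast
    show "\<forall>i\<le>s. w i = w' i"
    proof (intro allI impI)
      fix i assume i: "i \<le> s"
      have "tup_rmult G (cc i) (f i) j = tup_rmult G (cc' i) (f i) j" if "j < l" for j
      proof -
        have "ga_mult G (T j) (f i) = ga_mult G (T' j) (f i)" using TT[OF that] by simp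
        moreover have "ga_mult G (T j) (f i) = ga_mult G (cc i j) (f i)"
          unfolding T_def tup_rmult_def using proj[OF i, of "\<lambda>k. cc k j"] by simp
        moreover have "ga_mult G (T' j) (f i) = ga_mult G (cc' i j) (f i)"
          unfolding T'_def tup_rmult_def using proj[OF i, of "\<lambda>k. cc' k j"] by simp
        ultimately show ?thesis by (simp add: tup_rmult_def)
      qed
      then have "phi_l m e l (tup_rmult G (cc i) (f i)) = phi_l m e l (tup_rmult G (cc' i) (f i))"
        by (rule phi_l_cong)
      then show "w i = w' i" using cc[OF i] cc'[OF i] by simp
    qed
  qed
  have A3: "right_submodule G l (block G (f i)) (block G (f i)) ((\<lambda>c. tup_rmult G c (f i)) ` C)"
    if i: "i \<le> s" for i
    unfolding right_submodule_def
  proof (intro conjI ballI)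
    show "(\<lambda>c. tup_rmult G c (f i)) ` C \<subseteq> tuples l (block G (f i))"
    proof
      fix t assume "t \<in> (\<lambda>c. tup_rmult G c (f i)) ` C"
      then obtain c where c: "c \<in> C" "t = tup_rmult G c (f i)" by blast
      have "t j \<in> block G (f i)" if "j < l" for j
      proof -
        have "t j = ga_mult G (f i) (c j)" using c fcomm[OF i Cal[OF c(1)]] by (simp add: tup_rmult_def)
        then show ?thesis unfolding block_def using Cal[OF c(1)] by blast
      qed
      moreover have "t j = (\<lambda>x. 0)" if "\<not> j < l" for j
        using c Cz[OF c(1) that] by (simp add: tup_rmult_def)
      ultimately show "t \<in> tuples l (block G (f i))" by (auto simp: tuples_def)
    qed
    have "tup_rmult G tup_zero (f i) = tup_zero" by (simp add: tup_rmult_def tup_zero_def)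
    then show "tup_zero \<in> (\<lambda>c. tup_rmult G c (f i)) ` C" using Czero by (metis image_eqI)
  next
    fix t t' assume "t \<in> (\<lambda>c. tup_rmult G c (f i)) ` C" "t' \<in> (\<lambda>c. tup_rmult G c (f i)) ` C"
    then obtain c c' where c: "c \<in> C" "t = tup_rmult G c (f i)" "c' \<in> C" "t' = tup_rmult G c' (f i)" by blast
    have "tup_add t t' = tup_rmult G (tup_add c c') (f i)"
      using c by (simp add: tup_add_def tup_rmult_def ga_mult_add_left)
    then show "tup_add t t' \<in> (\<lambda>c. tup_rmult G c (f i)) ` C" using Cadd c by blast
  next
    fix t a assume "t \<in> (\<lambda>c. tup_rmult G c (f i)) ` C" and a: "a \<in> block G (f i)"
    then obtain c where c: "c \<in> C" "t = tup_rmult G c (f i)" by blast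
    have aal: "a \<in> grp_alg G" using a ga_mult_in by (auto simp: block_def)
    have "tup_rmult G t a = tup_rmult G (tup_rmult G c a) (f i)"
      using c fcomm[OF i aal] by (simp add: tup_rmult_def ga_mult_assoc[OF grp])
    then show "tup_rmult G t a \<in> (\<lambda>c. tup_rmult G c (f i)) ` C" using Crm[OF c(1) aal] by blast
  qed
  have PA: "is_direct_sum (phi_l m e l ` C) s
        (\<lambda>i. concat_code m l (phi m e) ((\<lambda>c. tup_rmult G c (f i)) ` C))"
    unfolding is_direct_sum_def concat_eq using A1 A2 unfolding W_def by blast
  have PB: "min_dist (phi_l m e l ` C)
            \<ge> (MIN i\<in>{..s}. ring_code_dist l ((\<lambda>c. tup_rmult G c (f i)) ` C)
                   * min_dist (phi m e ` block_sum G f i))"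
    unfolding min_dist_def[of "phi_l m e l ` C"]
  proof (rule INF_greatest)
    fix v assume "v \<in> phi_l m e l ` C - {\<lambda>p. 0}"
    then obtain c where c: "c \<in> C" "v = phi_l m e l c" "v \<noteq> (\<lambda>p. 0)" by blast
    have "c \<noteq> tup_zero"
    proof
      assume "c = tup_zero"
      then have "v = (\<lambda>p. 0)" using c(2) by (simp add: phi_l_def phi_def tup_zero_def fun_eq_iff)
      with c(3) show False by simp
    qed
    define K where "K = {k. k \<le> s \<and> tup_rmult G c (f k) \<noteq> tup_zero}"
    have "K \<noteq> {}"
    proof
      assume "K = {}"
      then have "tup_rmult G c (f k) = tup_zero" if "k \<le> s" for k using that by (auto simp: K_def)
      then have "c = (\<lambda>j x. \<Sum>k\<le>s. tup_zero j x)" using decC[OF c(1)] by (metis (no_types, lifting) atMost_iff sum.cong)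
      then show False using `c \<noteq> tup_zero` by (simp add: tup_zero_def)
    qed
    have finK: "finite K" by (simp add: K_def)
    define i where "i = Max K"
    have iK: "i \<in> K" using `K \<noteq> {}` finK by (simp add: i_def)
    then have i: "i \<le> s" "tup_rmult G c (f i) \<noteq> tup_zero" by (auto simp: K_def)
    have above: "tup_rmult G c (f k) = tup_zero" if "i < k" "k \<le> s" for k
    proof (rule ccontr)
      assume "tup_rmult G c (f k) \<noteq> tup_zero"
      then have "k \<in> K" using that by (simp add: K_def)
      then have "k \<le> i" using Max_ge[OF finK] by (simp add: i_def)
      then show False using that by simp
    qed
    define J where "J = {j. j < l \<and> tup_rmult G c (f i) j \<noteq> (\<lambda>x. 0)}"
    have "J \<noteq> {}"
    proof
      assume "J = {}"
      then have "tup_rmult G c (f i) j = (\<lambda>x. 0)" for j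
        using Cz[OF c(1)] by (cases "j < l") (auto simp: J_def tup_rmult_def)
      then show False using i(2) by (auto simp: tup_zero_def fun_eq_iff)
    qed
    have finJ: "finite J" by (simp add: J_def)
    define D where "D = min_dist (phi m e ` block_sum G f i)"
    define wt where "wt j = hweight (phi m e (c j))" for j
    have inBS: "c j \<in> block_sum G f i" for j
    proof -
      have "c j = (\<lambda>x. \<Sum>k\<le>s. ga_mult G (c j) (f k) x)" using dec[OF Cal[OF c(1)]] .
      also have "\<dots> = (\<lambda>x. \<Sum>k\<le>i. ga_mult G (c j) (f k) x)"
      proof (rule ext, rule sum.mono_neutral_right)
        fix x show "finite {..s}" by simp
        show "{..i} \<subseteq> {..s}" using i by auto
        show "\<forall>k\<in>{..s} - {..i}. ga_mult G (c j) (f k) x = 0"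
          using above by (auto simp: tup_rmult_def tup_zero_def fun_eq_iff)
      qed
      finally have "c j = (\<lambda>x. \<Sum>k\<le>i. ga_mult G (f k) (c j) x)"
        using fcomm Cal[OF c(1)] i by simp
      then show ?thesis unfolding block_sum_def block_def using Cal[OF c(1), of j]
        by (intro CollectI exI[of _ "\<lambda>k. ga_mult G (f k) (c j)"]) blast
    qed
    have Dle: "D \<le> enat (wt j)" if "j \<in> J" for j
    proof -
      have "c j \<noteq> (\<lambda>x. 0)" using that by (auto simp: J_def tup_rmult_def)
      then obtain x where x: "c j x \<noteq> 0" by auto
      then have "x \<in> carrier G" using Cal[OF c(1)] by (auto simp: grp_alg_def)
      then obtain k where k: "k < m" "x = e k" using ordm by (metis bij_betw_iff_bijections lessThan_iff)
      have "phi m e (c j) k \<noteq> 0" using k x by (simp add: phi_def)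
      then have "phi m e (c j) \<noteq> (\<lambda>p. 0)" by auto
      then have "phi m e (c j) \<in> phi m e ` block_sum G f i - {\<lambda>p. 0}" using inBS by blast
      then show ?thesis unfolding D_def min_dist_def wt_def by (rule INF_lower2) simp
    qed
    obtain j0 where j0: "j0 \<in> J" using `J \<noteq> {}` by blast
    obtain d where d: "D = enat d" using Dle[OF j0] by (cases D) auto
    have dle: "d \<le> wt j" if "j \<in> J" for j using Dle[OF that] d by simp
    have R: "ring_code_dist l ((\<lambda>c. tup_rmult G c (f i)) ` C) \<le> enat (card J)"
      unfolding ring_code_dist_def J_def
      by (rule INF_lower2[of "tup_rmult G c (f i)"]) (use c(1) i(2) in auto)
    have "card J * d = (\<Sum>j\<in>J. d)" by simp
    also have "\<dots> \<le> (\<Sum>j\<in>J. wt j)" using dle by (intro sum_mono) auto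
    also have "\<dots> \<le> (\<Sum>j<l. wt j)" by (rule sum_mono2) (auto simp: J_def)
    also have "\<dots> = hweight v" using c(2) hweight_phi_l[OF m0, of e l c] by (simp add: wt_def)
    finally have cd: "card J * d \<le> hweight v" .
    have "(MIN i\<in>{..s}. ring_code_dist l ((\<lambda>c. tup_rmult G c (f i)) ` C)
                   * min_dist (phi m e ` block_sum G f i))
          \<le> ring_code_dist l ((\<lambda>c. tup_rmult G c (f i)) ` C) * D"
      unfolding D_def using i by (intro Min_le) auto
    also have "\<dots> \<le> enat (card J) * enat d" unfolding d by (intro mult_right_mono R) simp
    also have "\<dots> \<le> enat (hweight v)" using cd by simp
    finally show "(MIN i\<in>{..s}. ring_code_dist l ((\<lambda>c. tup_rmult G c (f i)) ` C)
                   * min_dist (phi m e ` block_sum G f i)) \<le> enat (hweight v)" .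
  qed
  show ?thesis using PA PB A3 unfolding m_def by blast
qed

end
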